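(* Let $n\geq 2$ and $0<\delta<1$. If $f:\mathbb{R}^n\rightarrow\mathbb{R}^n$ is quasiconformal and $\sup_{z\in S^{n-1}}\widetilde{H}_f(B(z,r))\leq\delta/40$ for some $r>0$, then $f(S^{n-1})$ is $(\delta,R)$-Reifenberg flat for some $R>0$.
   Context: For $\Omega\subset\mathbb{R}^n$, $H_f(\Omega)=\sup\{|f(x)-f(y)|/|f(x)-f(z)|: x,y,z\in\Omega,\ |x-y|\leq|x-z|\}$ and $\widetilde{H}_f(\Omega)=H_f(\Omega)-1$. For a closed $\Sigma\subset\mathbb{R}^n$, $\theta_\Sigma(x,t)=\frac1t\min_{L}\mathrm{HD}[\Sigma\cap B(x,t),(x+L)\cap B(x,t)]$, minimum over $(n-1)$-dimensional linear subspaces $L$, $\mathrm{HD}$ the Hausdorff distance. $\Sigma$ is $(\delta,R)$-Reifenberg flat if $\theta_\Sigma(x,t)\leq\delta$ for all $x\in\Sigma$ and $0<t\leq R$. *)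

theory Defs
  imports "HOL-Analysis.Analysis"
begin

text \<open>Three-point weak quasisymmetry constant H_f(Omega) (valued in ereal, may be infinite).
  Triples with x = z are excluded (0/0); for an injective map this is the only degenerate case.\<close>
definition H_const :: "('a::metric_space \<Rightarrow> 'b::metric_space) \<Rightarrow> 'a set \<Rightarrow> ereal" where
  "H_const f \<Omega> = (SUP p \<in> {(x, y, z). x \<in> \<Omega> \<and> y \<in> \<Omega> \<and> z \<in> \<Omega> \<and> x \<noteq> z \<and> dist x y \<le> dist x z}.
      (case p of (x, y, z) \<Rightarrow> ereal (dist (f x) (f y) / dist (f x) (f z))))"

definition H_tilde :: "('a::metric_space \<Rightarrow> 'b::metric_space) \<Rightarrow> 'a set \<Rightarrow> ereal" where
  "H_tilde f \<Omega> = H_const f \<Omega> - 1"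

definition hausdorff_dist :: "'a::metric_space set \<Rightarrow> 'a set \<Rightarrow> real" where
  "hausdorff_dist A B = max (SUP a \<in> A. infdist a B) (SUP b \<in> B. infdist b A)"

definition theta :: "(real ^ 'n) set \<Rightarrow> real ^ 'n \<Rightarrow> real \<Rightarrow> real" where
  "theta \<Sigma> x t = (1 / t) * (INF L \<in> {L. subspace L \<and> dim L = CARD('n) - 1}.
      hausdorff_dist (\<Sigma> \<inter> cball x t) ((\<lambda>v. x + v) ` L \<inter> cball x t))"

definition reifenberg_flat :: "real \<Rightarrow> real \<Rightarrow> (real ^ 'n) set \<Rightarrow> bool" where
  "reifenberg_flat \<delta> R \<Sigma> \<longleftrightarrow> closed \<Sigma> \<and>
     (\<forall>x \<in> \<Sigma>. \<forall>t. 0 < t \<and> t \<le> R \<longrightarrow> theta \<Sigma> x t \<le> \<delta>)"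

text \<open>Metric definition of quasiconformality (Vaisala): a homeomorphism of R^n whose
  linear dilatation H(x,f) = limsup_{r->0} L_f(x,r)/l_f(x,r) is bounded on R^n.\<close>
definition lin_dilatation :: "(real ^ 'n \<Rightarrow> real ^ 'n) \<Rightarrow> real ^ 'n \<Rightarrow> ereal" where
  "lin_dilatation f x = Limsup (at_right 0)
     (\<lambda>r. ereal (Sup {dist (f y) (f x) | y. dist y x = r} / Inf {dist (f y) (f x) | y. dist y x = r}))"

definition quasiconformal :: "(real ^ 'n \<Rightarrow> real ^ 'n) \<Rightarrow> bool" where
  "quasiconformal f \<longleftrightarrow> (\<exists>g. homeomorphism UNIV UNIV f g) \<and>
     (\<exists>K::real. \<forall>x. lin_dilatation f x \<le> ereal K)"

end

theory Submission
  imports Defs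
begin

definition QS :: "('a::metric_space \<Rightarrow> 'b::metric_space) \<Rightarrow> 'a set \<Rightarrow> real \<Rightarrow> bool" where
  "QS f B H \<longleftrightarrow> (\<forall>x\<in>B. \<forall>y\<in>B. \<forall>z\<in>B. dist x y \<le> dist x z \<longrightarrow> dist (f x) (f y) \<le> H * dist (f x) (f z))"

lemma QSD: "QS f B H \<Longrightarrow> x \<in> B \<Longrightarrow> y \<in> B \<Longrightarrow> z \<in> B \<Longrightarrow> dist x y \<le> dist x z \<Longrightarrow> dist (f x) (f y) \<le> H * dist (f x) (f z)"
  unfolding QS_def by blast

lemma seg_hit:
  assumes hom: "homeomorphism UNIV UNIV f g" and P: "connected P" and w1: "f w1 \<in> P" and w2: "f w2 \<in> P"
   and phi: "continuous_on UNIV \<phi>" and le1: "\<phi> w1 \<le> \<rho>" and le2: "\<rho> \<le> \<phi> w2"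
  shows "\<exists>w. \<phi> w = (\<rho>::real) \<and> f w \<in> P"
proof -
  have gf: "\<And>x. g (f x) = x" and fg: "\<And>y. f (g y) = y" and cg: "continuous_on UNIV g"
    using hom by (auto simp: homeomorphism_def)
  have c1: "connected (g ` P)"
    by (rule connected_continuous_image[OF continuous_on_subset[OF cg] P]) auto
  have "connected (\<phi> ` g ` P)"
    by (rule connected_continuous_image[OF continuous_on_subset[OF phi] c1]) auto
  moreover have "\<phi> w1 \<in> \<phi> ` g ` P" using w1 gf by (metis image_eqI)
  moreover have "\<phi> w2 \<in> \<phi> ` g ` P" using w2 gf by (metis image_eqI)
  ultimately have "\<rho> \<in> \<phi> ` g ` P" using le1 le2 unfolding connected_iff_interval by blast
  then obtain y where "y \<in> P" "\<rho> = \<phi> (g y)" by auto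
  thus ?thesis using fg by metis
qed

lemma growth1:
  fixes f :: "'a::euclidean_space \<Rightarrow> 'b::euclidean_space"
  assumes hom: "homeomorphism UNIV UNIV f g" and qs: "QS f B H" and H: "H > 0"
    and sub: "cball c (2 * norm e) \<subseteq> B"
  shows "(1/H + 1/H^2) * dist (f (c + e)) (f c) \<le> dist (f (c + 2 *\<^sub>R e)) (f c)"
proof -
  define q m where "q = c + 2 *\<^sub>R e" and "m = c + e"
  have dq: "dist c q = 2 * norm e" by (simp add: q_def dist_norm)
  have "\<exists>v. dist c v = norm e \<and> f v \<in> closed_segment (f c) (f q)"
    by (rule seg_hit[of f g _ c q "dist c"]) (auto simp: dq hom intro!: continuous_intros)
  then obtain v where v: "dist c v = norm e" "f v \<in> closed_segment (f c) (f q)" by blast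
  have add: "dist (f c) (f q) = dist (f c) (f v) + dist (f v) (f q)"
    using between[of "f c" "f q" "f v"] between_mem_segment v(2) by auto
  have inB: "c \<in> B" "m \<in> B" "q \<in> B" "v \<in> B" using sub v(1) dq
    by (auto simp: m_def q_def dist_norm subset_iff)
  have dm: "dist c m = norm e" "dist m q = norm e" "dist m c = norm e" "dist q m = norm e"
    unfolding m_def q_def dist_norm by (auto simp: norm_minus_commute scaleR_2 algebra_simps)
  have "dist q v \<ge> norm e" using dist_triangle[of q c v] dq v(1) by (simp add: dist_commute)
  have h1: "dist (f c) (f m) \<le> H * dist (f c) (f v)"
    by (rule QSD[OF qs inB(1,2,4)]) (simp add: dm v)
  have h2: "dist (f m) (f c) \<le> H * dist (f m) (f q)"
    by (rule QSD[OF qs inB(2,1,3)]) (simp add: dm)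
  have h3: "dist (f q) (f m) \<le> H * dist (f q) (f v)"
    by (rule QSD[OF qs inB(3,2,4)]) (simp add: dm \<open>dist q v \<ge> norm e\<close>)
  define A where "A = dist (f m) (f c)"
  have "A / H \<le> dist (f c) (f v)" using h1 H by (simp add: A_def divide_simps dist_commute mult.commute)
  moreover have "A / H \<le> dist (f q) (f m)" using h2 H by (simp add: A_def divide_simps dist_commute mult.commute)
  then have "A / H^2 \<le> dist (f q) (f v)" using h3 H
  proof -
    assume a: "A / H \<le> dist (f q) (f m)"
    have "A / H \<le> H * dist (f q) (f v)" using a h3 by linarith
    then have "A \<le> H * (H * dist (f q) (f v))" using H by (simp add: divide_le_eq mult.commute)
    thus ?thesis using H by (simp add: divide_le_eq power2_eq_square mult.commute mult.left_commute)
  qed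
  ultimately have "A/H + A/H^2 \<le> dist (f c) (f q)" using add by (simp add: dist_commute)
  thus ?thesis by (simp add: A_def m_def q_def algebra_simps dist_commute add_divide_distrib)
qed

lemma growthk:
  fixes f :: "'a::euclidean_space \<Rightarrow> 'b::euclidean_space"
  assumes hom: "homeomorphism UNIV UNIV f g" and qs: "QS f B H" and H: "H > 0"
  shows "cball c (2^k * norm e) \<subseteq> B \<Longrightarrow>
    (1/H + 1/H^2)^k * dist (f (c + e)) (f c) \<le> dist (f (c + (2^k) *\<^sub>R e)) (f c)"
proof (induction k)
  case 0
  then show ?case by simp
next
  case (Suc k)
  have "cball c (2^k * norm e) \<subseteq> cball c (2^Suc k * norm e)"
    by (rule subset_cball) simp
  then have IH: "(1/H + 1/H^2)^k * dist (f (c + e)) (f c) \<le> dist (f (c + (2^k) *\<^sub>R e)) (f c)"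
    using Suc by blast
  have sub: "cball c (2 * norm ((2^k) *\<^sub>R e)) \<subseteq> B" using Suc.prems by (simp add: mult.assoc)
  have g1: "(1/H + 1/H^2) * dist (f (c + (2^k) *\<^sub>R e)) (f c) \<le> dist (f (c + 2 *\<^sub>R ((2^k) *\<^sub>R e))) (f c)"
    by (rule growth1[OF hom qs H sub])
  have gp: "0 \<le> 1/H + 1/H^2" using H by simp
  have "(1/H + 1/H^2)^Suc k * dist (f (c + e)) (f c) = (1/H + 1/H^2) * ((1/H + 1/H^2)^k * dist (f (c + e)) (f c))"
    by simp
  also have "\<dots> \<le> (1/H + 1/H^2) * dist (f (c + (2^k) *\<^sub>R e)) (f c)"
    by (rule mult_left_mono[OF IH gp])
  also have "\<dots> \<le> dist (f (c + (2^Suc k) *\<^sub>R e)) (f c)" using g1 by simp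
  finally show ?case .
qed


lemma norm_sq_sub:
  fixes w x0 :: "'a::real_inner"
  assumes "norm x0 = 1"
  shows "norm (w - c *\<^sub>R x0)^2 = norm w^2 - 2*c*(w \<bullet> x0) + c^2"
proof -
  have "x0 \<bullet> x0 = 1" using assms by (metis power2_norm_eq_inner one_power2)
  thus ?thesis unfolding power2_norm_eq_inner
    apply (simp add: inner_diff_left inner_diff_right inner_commute[of x0 w] power2_eq_square)
    by (simp add: algebra_simps)
qed

lemma gamma_bound:
  assumes "0 < (\<epsilon>::real)" "\<epsilon> \<le> 1/40"
  shows "1.92 \<le> 1/(1+\<epsilon>) + 1/(1+\<epsilon>)^2"
proof -
  have a: "40/41 \<le> 1/(1+\<epsilon>)" using assms by (simp add: divide_simps)
  have "(40/41)^2 \<le> (1/(1+\<epsilon>))^2" by (rule power_mono[OF a]) simp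
  then have "(40/41)^2 \<le> 1/(1+\<epsilon>)^2" by (simp add: power_divide)
  moreover have "1.92 \<le> 40/41 + (40/41::real)^2" by (simp add: power2_eq_square)
  ultimately show ?thesis using a by linarith
qed

lemma dist_le_from_sq:
  fixes a b :: real
  assumes "a^2 \<le> b^2" "0 \<le> b" shows "a \<le> b"
  using assms by (rule power2_le_imp_le)


lemma dist_scal:
  fixes x0 :: "'a::real_normed_vector"
  assumes "norm x0 = 1" shows "dist (\<alpha> *\<^sub>R x0) (\<beta> *\<^sub>R x0) = \<bar>\<alpha> - \<beta>\<bar>"
  using assms by (simp add: dist_norm scaleR_diff_left[symmetric])

lemma dist_scal1:
  fixes x0 :: "'a::real_normed_vector"
  assumes "norm x0 = 1" shows "dist x0 (\<beta> *\<^sub>R x0) = \<bar>1 - \<beta>\<bar>" "dist (\<beta> *\<^sub>R x0) x0 = \<bar>\<beta> - 1\<bar>"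
  using dist_scal[OF assms, of 1 \<beta>] dist_scal[OF assms, of \<beta> 1] by auto

lemma seg_comb:
  fixes y N :: "'a::real_vector"
  shows "(1-\<tau>) *\<^sub>R (y - K *\<^sub>R N) + \<tau> *\<^sub>R (y + K *\<^sub>R N) = y + ((2*\<tau>-1)*K) *\<^sub>R N"
proof -
  have "(1-\<tau>) *\<^sub>R (y - K *\<^sub>R N) + \<tau> *\<^sub>R (y + K *\<^sub>R N) = y + (\<tau>*K + \<tau>*K - K) *\<^sub>R N"
    apply (simp add: algebra_simps)
    by (metis scaleR_add_left mult_2_right mult.commute mult.left_commute)
  also have "\<tau>*K + \<tau>*K - K = (2*\<tau>-1)*K" by (simp add: algebra_simps)
  finally show ?thesis .
qed

lemma local_flat:
  fixes f :: "'a::euclidean_space \<Rightarrow> 'a" and x0 :: 'a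
  assumes hom: "homeomorphism UNIV UNIV f g"
    and x0: "norm x0 = 1"
    and qs0: "QS f (ball x0 r) (1+\<epsilon>)"
    and eps: "0 < \<epsilon>" "\<epsilon> \<le> 1/40"
    and s: "0 < s" "16 * s \<le> r"
    and sk: "2^k * 32 * s \<le> 1"
    and gk: "(1+\<epsilon>)^2 \<le> (\<epsilon>/8) * (1/(1+\<epsilon>) + 1/(1+\<epsilon>)^2)^k"
    and tdef: "t = dist (f ((1+s) *\<^sub>R x0)) (f ((1-s) *\<^sub>R x0))" and t0: "0 < t"
  shows "\<exists>N. norm N = 1 \<and> hausdorff_dist (f ` sphere 0 1 \<inter> cball (f x0) t)
            ({q. N \<bullet> (q - f x0) = 0} \<inter> cball (f x0) t) \<le> 40 * \<epsilon> * t"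
proof -
  define H where "H = 1 + \<epsilon>"
  define \<gamma> where "\<gamma> = 1/H + 1/H^2"
  have H: "0 < H" "1 \<le> H" "H \<le> 41/40" using eps by (auto simp: H_def)
  have \<gamma>: "1.92 \<le> \<gamma>" using gamma_bound[OF eps] by (simp add: \<gamma>_def H_def)
  have qs: "QS f (ball x0 r) H" using qs0 by (simp add: H_def)
  have gf: "\<And>x. g (f x) = x" and fg: "\<And>y. f (g y) = y"
    using hom by (auto simp: homeomorphism_def)
  define a b p u v where "a = (1+s) *\<^sub>R x0" and "b = (1-s) *\<^sub>R x0" and "p = f x0" and "u = f a" and "v = f b"
  define sgm where "sgm = 64 * s^2"
  define b' where "b' = (1-s-sgm) *\<^sub>R x0"
  define v' where "v' = f b'"
  have t: "t = dist u v" using tdef by (simp add: u_def v_def a_def b_def)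
  have "(1::real) \<le> 2^k" by simp
  then have "1 * (32 * s) \<le> 2^k * (32 * s)" by (rule mult_right_mono) (use s in simp)
  then have s1: "s \<le> 1/32" using sk by simp
  have sgms: "sgm \<le> 2 * s" "0 < sgm" using s s1 by (auto simp: sgm_def power2_eq_square)
  have x0': "x0 = 1 *\<^sub>R x0" by simp
  have d: "dist x0 a = s" "dist x0 b = s" "dist a b = 2 * s" "dist b b' = sgm" "dist a x0 = s" "dist b x0 = s"
    "dist b a = 2 * s" "dist x0 b' = s + sgm"
    using s sgms unfolding a_def b_def b'_def
    by (simp_all add: dist_scal[OF x0] dist_scal1[OF x0] x0)
  have inB: "x0 \<in> ball x0 r" "a \<in> ball x0 r" "b \<in> ball x0 r" "b' \<in> ball x0 r"
    using d s sgms by (auto simp: dist_commute)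
  have pu: "dist p u \<le> H * t"
    using QSD[OF qs inB(2,1,3)] d s by (simp add: p_def u_def v_def t dist_commute)
  have pv: "dist p v \<le> H * t"
    using QSD[OF qs inB(3,1,2)] d s by (simp add: p_def u_def v_def t dist_commute)
  have pvu: "dist p v \<le> H * dist p u"
    using QSD[OF qs inB(1,3,2)] d s by (simp add: p_def u_def v_def)
  have tpu: "t \<le> (1+H) * dist p u"
    using dist_triangle[of u v p] pvu t by (simp add: dist_commute algebra_simps)
  have pre: "dist w x0 < 8 * s" if w: "dist (f w) p \<le> 2*t" for w
  proof (rule ccontr)
    assume nw: "\<not> dist w x0 < 8 * s"
    have "\<exists>v1. dist x0 v1 = 8 * s \<and> f v1 \<in> closed_segment p (f w)"
      by (rule seg_hit[of f g _ x0 w "dist x0"]) (use hom nw s in \<open>auto simp: p_def dist_commute intro!: continuous_intros\<close>)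
    then obtain v1 where v1: "dist x0 v1 = 8 * s" "f v1 \<in> closed_segment p (f w)" by blast
    have fv1: "dist (f v1) p \<le> 2*t" using dist_in_closed_segment[OF v1(2)] w
      by (simp add: dist_commute)
    define e where "e = (1/8) *\<^sub>R (v1 - x0)"
    have ne: "norm e = s" using v1(1) by (simp add: e_def dist_norm norm_minus_commute)
    have v1e: "x0 + (2^3) *\<^sub>R e = v1" by (simp add: e_def)
    have sub: "cball x0 (2^3 * norm e) \<subseteq> ball x0 r"
    proof
      fix y assume "y \<in> cball x0 (2^3 * norm e)"
      then have "dist x0 y \<le> 8 * s" using ne by simp
      then show "y \<in> ball x0 r" using s by simp
    qed
    have g3: "\<gamma>^3 * dist (f (x0+e)) (f x0) \<le> dist (f (x0 + (2^3) *\<^sub>R e)) (f x0)"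
      using growthk[OF hom qs H(1) sub] by (simp add: \<gamma>_def)
    have xe: "x0 + e \<in> ball x0 r" using ne s by (auto simp: dist_norm)
    have h: "dist p u \<le> H * dist p (f (x0+e))"
      using QSD[OF qs inB(1,2) xe] d ne by (simp add: p_def u_def dist_norm)
    define X where "X = dist (f (x0+e)) p"
    have X0: "0 \<le> X" by (simp add: X_def)
    have "(7::real) \<le> 1.92^3" by (simp add: power3_eq_cube)
    also have "1.92^3 \<le> \<gamma>^3" by (rule power_mono[OF \<gamma>]) simp
    finally have "7 * X \<le> \<gamma>^3 * X" by (rule mult_right_mono[OF _ X0])
    have "H * X \<le> 41/40 * X" by (rule mult_right_mono[OF H(3) X0])
    have "(1+H) * dist p u \<le> 81/40 * dist p u" by (rule mult_right_mono) (use H in auto)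
    have "dist (f v1) p \<ge> \<gamma>^3 * X" using g3 v1e by (simp add: X_def p_def)
    show False using \<open>7 * X \<le> \<gamma>^3 * X\<close> \<open>H * X \<le> 41/40 * X\<close> \<open>(1+H) * dist p u \<le> 81/40 * dist p u\<close>
      \<open>dist (f v1) p \<ge> \<gamma>^3 * X\<close> h tpu fv1 t0 by (simp add: X_def dist_commute)
  qed
  have preB: "w \<in> ball x0 r" if "dist (f w) p \<le> 2*t" for w
    using pre[OF that] s by (simp add: dist_commute)
  have eta: "dist v v' \<le> (\<epsilon>/8) * t"
  proof -
    define e2 where "e2 = sgm *\<^sub>R x0"
    have ne2: "norm e2 = sgm" using x0 sgms by (simp add: e2_def)
    have "2^k * sgm = 2 * s * (2^k * 32 * s)" by (simp add: sgm_def power2_eq_square)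
    also have "\<dots> \<le> 2 * s * 1" by (rule mult_left_mono[OF sk]) (use s in simp)
    finally have ksg: "2^k * sgm \<le> 2 * s" by simp
    have sub: "cball b (2^k * norm e2) \<subseteq> ball x0 r"
    proof
      fix y assume "y \<in> cball b (2^k * norm e2)"
      then have "dist b y \<le> 2 * s" using ksg ne2 by simp
      then show "y \<in> ball x0 r" using dist_triangle[of x0 y b] d s by simp
    qed
    have gk': "\<gamma>^k * dist (f (b + e2)) (f b) \<le> dist (f (b + (2^k) *\<^sub>R e2)) (f b)"
      using growthk[OF hom qs H(1) sub] by (simp add: \<gamma>_def)
    have be2: "b + e2 \<in> ball x0 r" "b + (2^k) *\<^sub>R e2 \<in> ball x0 r"
      using sub ne2 sgms ksg by (auto simp: subset_iff dist_norm)
    have h1: "dist v v' \<le> H * dist v (f (b+e2))"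
      using QSD[OF qs inB(3,4) be2(1)] d ne2 by (simp add: v_def v'_def dist_norm)
    have h2: "dist v (f (b + (2^k) *\<^sub>R e2)) \<le> H * t"
      using QSD[OF qs inB(3) be2(2) inB(2)] d ne2 ksg by (simp add: v_def u_def t dist_norm norm_minus_commute)
    have gpos: "0 < \<gamma>^k" using \<gamma> by simp
    have "\<gamma>^k * dist v v' \<le> \<gamma>^k * (H * dist v (f (b+e2)))" by (rule mult_left_mono[OF h1]) (use gpos in simp)
    also have "\<dots> = H * (\<gamma>^k * dist (f (b+e2)) (f b))" by (simp add: v_def dist_commute algebra_simps)
    also have "\<dots> \<le> H * dist (f (b + (2^k) *\<^sub>R e2)) (f b)" by (rule mult_left_mono[OF gk']) (use H in simp)
    also have "\<dots> \<le> H * (H * t)" by (rule mult_left_mono) (use h2 H in \<open>simp_all add: v_def dist_commute\<close>)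
    also have "\<dots> = H^2 * t" by (simp add: power2_eq_square)
    also have "\<dots> \<le> ((\<epsilon>/8) * \<gamma>^k) * t" by (rule mult_right_mono) (use gk t0 in \<open>simp_all add: H_def \<gamma>_def\<close>)
    also have "\<dots> = \<gamma>^k * ((\<epsilon>/8) * t)" by simp
    finally show ?thesis using gpos by (simp add: mult_le_cancel_left_pos)
  qed
  have Ht: "H * t \<le> 41/40 * t" by (rule mult_right_mono[OF H(3)]) (use t0 in simp)
  define N where "N = (1/t) *\<^sub>R (u - v)"
  have nN: "norm N = 1" using t t0 by (simp add: N_def dist_norm)
  have NN: "N \<bullet> N = 1" using nN by (metis power2_norm_eq_inner one_power2)
  define hq where "hq q = (q - (1/2) *\<^sub>R (u+v)) \<bullet> N" for q
  have hdiff: "hq q1 - hq q2 = N \<bullet> (q1 - q2)" for q1 q2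
    by (simp add: hq_def inner_diff_left inner_diff_right inner_commute[of N])
  have uvN: "u - v = t *\<^sub>R N" using t0 by (simp add: N_def)
  have ident: "dist q v^2 - dist q u^2 = 2*t*hq q" for q
  proof -
    have "dist q v^2 - dist q u^2 = 2 * ((q - (1/2) *\<^sub>R (u+v)) \<bullet> (u - v))"
      unfolding dist_norm power2_norm_eq_inner
      by (simp add: inner_diff_left inner_diff_right inner_add_left inner_add_right inner_commute algebra_simps)
    also have "\<dots> = 2*t*hq q" by (simp add: uvN hq_def)
    finally show ?thesis .
  qed
  have regI: "hq q \<le> 10*\<epsilon>*t" if q1: "dist q p \<le> 2*t" and q2: "dist q v \<le> H * dist q u" for q
  proof -
    define \<alpha> where "\<alpha> = dist q u"
    define \<beta> where "\<beta> = dist q v"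
    have a1: "\<alpha> \<le> 121/40 * t" using dist_triangle[of q u p] q1 pu Ht unfolding \<alpha>_def
      by linarith
    have a0: "0 \<le> \<alpha>" by (simp add: \<alpha>_def)
    have a2: "\<alpha>^2 \<le> (121/40 * t)^2" by (rule power_mono[OF a1 a0])
    have b1: "\<beta>^2 \<le> (H*\<alpha>)^2" by (rule power_mono) (use q2 in \<open>simp_all add: \<alpha>_def \<beta>_def\<close>)
    have "2*t*hq q = \<beta>^2 - \<alpha>^2" using ident[of q] by (simp add: \<alpha>_def \<beta>_def)
    also have "\<dots> \<le> (H^2 - 1) * \<alpha>^2" using b1 by (simp add: power_mult_distrib algebra_simps)
    also have "\<dots> \<le> (H^2 - 1) * (121/40 * t)^2" by (rule mult_left_mono[OF a2]) (use H in simp)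
    also have "\<dots> \<le> (81/40*\<epsilon>) * (121/40 * t)^2"
    proof (rule mult_right_mono)
      have "H^2 - 1 = \<epsilon> * (2 + \<epsilon>)" by (simp add: H_def power2_eq_square algebra_simps)
      also have "\<dots> \<le> \<epsilon> * (81/40)" by (rule mult_left_mono) (use eps in auto)
      finally show "H^2 - 1 \<le> 81/40*\<epsilon>" by simp
    qed simp
    also have "\<dots> \<le> 2*t*(10*\<epsilon>*t)" using eps t0 by (simp add: power2_eq_square)
    finally show ?thesis using t0 by simp
  qed
  have regO: "- hq q \<le> 10*\<epsilon>*t" if q1: "dist q p \<le> 2*t" and q2: "dist q u \<le> H * dist q v'" for q
  proof -
    define \<alpha> where "\<alpha> = dist q u"
    define \<beta> where "\<beta> = dist q v"
    have a1: "\<alpha> \<le> 121/40 * t" using dist_triangle[of q u p] q1 pu Ht unfolding \<alpha>_def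
      by linarith
    have b1: "\<beta> \<le> 121/40 * t" using dist_triangle[of q v p] q1 pv Ht unfolding \<beta>_def
      by (simp add: dist_commute)
    have a0: "0 \<le> \<alpha>" "0 \<le> \<beta>" by (simp_all add: \<alpha>_def \<beta>_def)
    have "dist q v' \<le> \<beta> + (\<epsilon>/8)*t" using dist_triangle[of q v' v] eta unfolding \<beta>_def by simp
    then have "\<alpha> \<le> H * (\<beta> + (\<epsilon>/8)*t)" using q2 H unfolding \<alpha>_def
      by (smt (verit) mult_left_mono)
    also have "\<dots> = \<beta> + \<epsilon> * \<beta> + H * (\<epsilon>/8*t)" by (simp add: H_def algebra_simps)
    finally have c1: "\<alpha> - \<beta> \<le> \<epsilon> * \<beta> + H * (\<epsilon>/8*t)" by simp
    have "\<epsilon> * \<beta> \<le> \<epsilon> * (121/40 * t)" by (rule mult_left_mono[OF b1]) (use eps in simp)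
    moreover have "H * (\<epsilon>/8*t) \<le> 41/40 * (\<epsilon>/8*t)" by (rule mult_right_mono[OF H(3)]) (use eps t0 in simp)
    ultimately have c2: "\<alpha> - \<beta> \<le> 1009/320 * \<epsilon> * t" using c1 by simp
    have "-2*t*hq q = \<alpha>^2 - \<beta>^2" using ident[of q] by (simp add: \<alpha>_def \<beta>_def)
    also have "\<dots> \<le> 2*t*(10*\<epsilon>*t)"
    proof (cases "\<alpha> \<le> \<beta>")
      case True
      then have "\<alpha>^2 \<le> \<beta>^2" by (rule power_mono) (use a0 in simp)
      moreover have "0 \<le> t * (\<epsilon> * t)" using eps t0 by simp
      ultimately show ?thesis by linarith
    next
      case False
      have "\<alpha>^2 - \<beta>^2 = (\<alpha> - \<beta>) * (\<alpha> + \<beta>)" by (simp add: power2_eq_square algebra_simps)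
      also have "\<dots> \<le> (1009/320 * \<epsilon> * t) * (121/20 * t)"
        by (rule mult_mono) (use c2 a1 b1 False a0 eps t0 in auto)
      also have "\<dots> \<le> 2*t*(10*\<epsilon>*t)" using eps t0 by (simp add: power2_eq_square)
      finally show ?thesis .
    qed
    finally have "t * (- hq q) \<le> t * (10*\<epsilon>*t)" by (simp add: algebra_simps)
    thus ?thesis using t0 by (simp only: mult_le_cancel_left_pos)
  qed
  have in1: "hq (f w) \<le> 10*\<epsilon>*t" if w1: "dist (f w) p \<le> 2*t" and w2: "norm w \<le> 1" for w
  proof -
    have wB: "w \<in> ball x0 r" by (rule preB[OF w1])
    have wx: "w \<bullet> x0 \<le> 1" using norm_cauchy_schwarz[of w x0] w2 x0 by simp
    have swx: "s * (w \<bullet> x0) \<le> s * 1" by (rule mult_left_mono[OF wx]) (use s in simp)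
    have e1: "norm (w - b)^2 = norm w^2 - 2*(1-s)*(w \<bullet> x0) + (1-s)^2"
      unfolding b_def by (rule norm_sq_sub[OF x0])
    have e2: "norm (w - a)^2 = norm w^2 - 2*(1+s)*(w \<bullet> x0) + (1+s)^2"
      unfolding a_def by (rule norm_sq_sub[OF x0])
    have e3: "2*(1-s)*(w \<bullet> x0) = 2*(w \<bullet> x0) - 2*(s*(w \<bullet> x0))" "2*(1+s)*(w \<bullet> x0) = 2*(w \<bullet> x0) + 2*(s*(w \<bullet> x0))"
      "(1-s)^2 = 1 - 2 * s + s^2" "(1+s)^2 = 1 + 2 * s + s^2"
      by (simp_all add: algebra_simps power2_eq_square)
    have "norm (w - b)^2 \<le> norm (w - a)^2" unfolding e1 e2 e3 using swx by linarith
    then have "norm (w - b) \<le> norm (w - a)" by (rule dist_le_from_sq) simp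
    then have "dist w b \<le> dist w a" by (simp add: dist_norm)
    then have "dist (f w) v \<le> H * dist (f w) u" using QSD[OF qs wB inB(3) inB(2)] by (simp add: u_def v_def)
    thus ?thesis by (rule regI[OF w1])
  qed
  have out1: "- hq (f w) \<le> 10*\<epsilon>*t" if w1: "dist (f w) p \<le> 2*t" and w2: "1 \<le> norm w" for w
  proof -
    have wB: "w \<in> ball x0 r" by (rule preB[OF w1])
    have wd: "norm (w - x0) < 8 * s" using pre[OF w1] by (simp add: dist_norm)
    have "norm (w - x0)^2 < (8 * s)^2" by (rule power_strict_mono[OF wd]) simp_all
    then have l1: "norm (w - x0)^2 < sgm" by (simp add: sgm_def power_mult_distrib)
    have e1: "norm (w - x0)^2 = norm w^2 - 2*(w \<bullet> x0) + 1" using norm_sq_sub[OF x0, of w 1] by simp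
    have "1 \<le> norm w ^2" using w2 by (simp add: one_le_power)
    hence wx: "2 - sgm - 2*(w \<bullet> x0) \<le> 0" using l1 e1 by linarith
    have e2: "norm (w - a)^2 = norm w^2 - 2*(1+s)*(w \<bullet> x0) + (1+s)^2"
      unfolding a_def by (rule norm_sq_sub[OF x0])
    have e4: "norm (w - b')^2 = norm w^2 - 2*(1-s-sgm)*(w \<bullet> x0) + (1-s-sgm)^2"
      unfolding b'_def by (rule norm_sq_sub[OF x0])
    have "norm (w - a)^2 - norm (w - b')^2 = (2 * s + sgm) * (2 - sgm - 2*(w \<bullet> x0))"
      unfolding e2 e4 by (simp add: power2_eq_square algebra_simps)
    also have "\<dots> \<le> 0" by (rule mult_nonneg_nonpos) (use s sgms wx in auto)
    finally have "norm (w - a)^2 \<le> norm (w - b')^2" by simp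
    then have "norm (w - a) \<le> norm (w - b')" by (rule dist_le_from_sq) simp
    then have "dist w a \<le> dist w b'" by (simp add: dist_norm)
    then have "dist (f w) u \<le> H * dist (f w) v'" using QSD[OF qs wB inB(2) inB(4)] by (simp add: u_def v'_def)
    thus ?thesis by (rule regO[OF w1])
  qed
  define A where "A = f ` sphere 0 1 \<inter> cball p t"
  define Pl where "Pl = {q. N \<bullet> (q - p) = 0} \<inter> cball p t"
  have hA: "\<bar>hq q\<bar> \<le> 10*\<epsilon>*t" if qA: "q \<in> A" for q
  proof -
    obtain w where w: "q = f w" "norm w = 1" "dist p q \<le> t" using qA by (auto simp: A_def)
    have "dist (f w) p \<le> 2*t" using w t0 by (simp add: dist_commute)
    then have "hq (f w) \<le> 10*\<epsilon>*t" "- hq (f w) \<le> 10*\<epsilon>*t"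
      using in1 out1 w(2) by simp_all
    then show ?thesis using w(1) by (simp add: abs_le_iff)
  qed
  have pA: "p \<in> A" using x0 t0 by (auto simp: A_def p_def)
  have pPl: "p \<in> Pl" using t0 by (auto simp: Pl_def)
  have hp: "\<bar>hq p\<bar> \<le> 10*\<epsilon>*t" by (rule hA[OF pA])
  have et: "0 < \<epsilon> * t" using eps t0 by simp
  have D1: "infdist x Pl \<le> 40*\<epsilon>*t" if xA: "x \<in> A" for x
  proof -
    define c where "c = N \<bullet> (x - p)"
    define x' where "x' = x - c *\<^sub>R N"
    have Nx': "N \<bullet> (x' - p) = 0" by (simp add: x'_def c_def inner_diff_right NN algebra_simps)
    have "norm (x' - p)^2 = norm ((x - p) - c *\<^sub>R N)^2" by (simp add: x'_def algebra_simps)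
    also have "\<dots> = norm (x - p)^2 - c^2" using norm_sq_sub[OF nN, of "x - p" c]
      by (simp add: c_def inner_commute power2_eq_square)
    also have "\<dots> \<le> t^2"
    proof -
      have "norm (x - p) \<le> t" using xA by (simp add: A_def dist_norm norm_minus_commute)
      then have "norm (x - p)^2 \<le> t^2" by (rule power_mono) simp
      then show ?thesis using zero_le_power2[of c] by linarith
    qed
    finally have "norm (x' - p) \<le> t" by (rule dist_le_from_sq) (use t0 in simp)
    then have "dist p x' \<le> t" by (simp add: dist_norm norm_minus_commute)
    then have x'P: "x' \<in> Pl" using Nx' by (simp add: Pl_def)
    have "infdist x Pl \<le> dist x x'" by (rule infdist_le[OF x'P])
    also have "\<dots> = \<bar>c\<bar>" using nN by (simp add: x'_def dist_norm)
    also have "\<dots> = \<bar>hq x - hq p\<bar>" by (simp add: hdiff c_def)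
    also have "\<dots> \<le> 40*\<epsilon>*t" using hA[OF xA] hp et by simp
    finally show ?thesis .
  qed
  have D2: "infdist y A \<le> 40*\<epsilon>*t" if yP: "y \<in> Pl" for y
  proof -
    have Ny: "N \<bullet> (y - p) = 0" and dy: "norm (y - p) \<le> t" using yP
      by (auto simp: Pl_def dist_norm norm_minus_commute)
    define \<kappa> where "\<kappa> = 21*\<epsilon>"
    have k0: "0 < \<kappa>" "\<kappa> \<le> 21/40" using eps by (auto simp: \<kappa>_def)
    have "\<kappa>^2 = 441 * (\<epsilon> * \<epsilon>)" by (simp add: \<kappa>_def power2_eq_square)
    also have "\<dots> \<le> 441 * (\<epsilon> * (1/40))" using eps by (intro mult_left_mono) auto
    finally have k2: "\<kappa>^2 \<le> 441/40 * \<epsilon>" by simp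
    have k1: "\<kappa>^2 \<le> 1"
    proof -
      have "\<kappa>^2 \<le> 1^2" by (rule power_mono) (use k0 in simp_all)
      then show ?thesis by simp
    qed
    define y' where "y' = p + (1 - \<kappa>^2) *\<^sub>R (y - p)"
    have Ny': "N \<bullet> (y' - p) = 0" using Ny by (simp add: y'_def)
    have ny': "norm (y' - p) \<le> (1-\<kappa>^2) * t" using dy k1 by (simp add: y'_def mult_left_mono)
    define Yp where "Yp = y' + (\<kappa>*t) *\<^sub>R N"
    define Ym where "Ym = y' - (\<kappa>*t) *\<^sub>R N"
    have hYp: "hq Yp = hq p + \<kappa>*t" using hdiff[of Yp p] Ny' NN
      by (simp add: Yp_def inner_diff_right inner_add_right algebra_simps)
    have hYm: "hq Ym = hq p - \<kappa>*t" using hdiff[of Ym p] Ny' NN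
      by (simp add: Ym_def inner_diff_right inner_add_right algebra_simps)
    have kt: "\<kappa> * t \<le> t" using k0 t0 by simp
    have k2t: "\<kappa>^2 * t \<le> t" using k1 t0 by simp
    have dYp: "dist Yp p \<le> 2*t"
    proof -
      have "dist Yp p = norm ((y' - p) + (\<kappa>*t) *\<^sub>R N)" by (simp add: dist_norm Yp_def algebra_simps)
      also have "\<dots> \<le> norm (y' - p) + \<kappa>*t" using norm_triangle_ineq[of "y' - p" "(\<kappa>*t) *\<^sub>R N"] nN k0 t0 by simp
      finally have "dist Yp p \<le> norm (y' - p) + \<kappa>*t" .
      moreover have "0 \<le> \<kappa>^2 * t" using t0 by simp
      moreover have "(1-\<kappa>^2)*t = t - \<kappa>^2 * t" by (simp add: algebra_simps)
      ultimately show ?thesis using ny' kt by linarith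
    qed
    have dYm: "dist Ym p \<le> 2*t"
    proof -
      have "dist Ym p = norm ((y' - p) - (\<kappa>*t) *\<^sub>R N)" by (simp add: dist_norm Ym_def algebra_simps)
      also have "\<dots> \<le> norm (y' - p) + \<kappa>*t" using norm_triangle_ineq4[of "y' - p" "(\<kappa>*t) *\<^sub>R N"] nN k0 t0 by simp
      finally have "dist Ym p \<le> norm (y' - p) + \<kappa>*t" .
      moreover have "0 \<le> \<kappa>^2 * t" using t0 by simp
      moreover have "(1-\<kappa>^2)*t = t - \<kappa>^2 * t" by (simp add: algebra_simps)
      ultimately show ?thesis using ny' kt by linarith
    qed
    have nwp: "1 < norm (g Yp)"
    proof (rule ccontr)
      assume "\<not> 1 < norm (g Yp)"
      then have "hq (f (g Yp)) \<le> 10*\<epsilon>*t" using in1[of "g Yp"] dYp fg by simp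
      then show False using hYp hp et fg by (simp add: \<kappa>_def)
    qed
    have nwm: "norm (g Ym) < 1"
    proof (rule ccontr)
      assume "\<not> norm (g Ym) < 1"
      then have "- hq (f (g Ym)) \<le> 10*\<epsilon>*t" using out1[of "g Ym"] dYm fg by simp
      then show False using hYm hp et fg by (simp add: \<kappa>_def)
    qed
    have "\<exists>w. norm w = 1 \<and> f w \<in> closed_segment Ym Yp"
      by (rule seg_hit[of f g _ "g Ym" "g Yp" norm]) (use hom nwp nwm fg in \<open>auto intro: continuous_intros\<close>)
    then obtain w where w: "norm w = 1" "f w \<in> closed_segment Ym Yp" by blast
    then obtain \<tau> where \<tau>: "0 \<le> \<tau>" "\<tau> \<le> 1" "f w = (1-\<tau>) *\<^sub>R Ym + \<tau> *\<^sub>R Yp"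
      by (auto simp: closed_segment_def)
    define c where "c = (2*\<tau> - 1)*(\<kappa>*t)"
    have fw: "f w - p = (y' - p) - (-c) *\<^sub>R N"
      using seg_comb[of \<tau> y' "\<kappa>*t" N] by (simp add: \<tau>(3) Yp_def Ym_def c_def)
    have cb: "\<bar>c\<bar> \<le> \<kappa>*t"
    proof -
      have "\<bar>2*\<tau> - 1\<bar> \<le> 1" using \<tau> by simp
      then have "\<bar>2*\<tau> - 1\<bar> * (\<kappa>*t) \<le> 1 * (\<kappa>*t)" by (rule mult_right_mono) (use k0 t0 in simp)
      then show ?thesis using k0 t0 by (simp add: c_def abs_mult)
    qed
    have "norm (f w - p)^2 = norm (y' - p)^2 + c^2"
      unfolding fw using norm_sq_sub[OF nN, of "y' - p" "-c"] Ny' by (simp add: inner_commute)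
    also have "\<dots> \<le> ((1-\<kappa>^2) * t)^2 + (\<kappa>*t)^2"
    proof (rule add_mono)
      show "norm (y' - p)^2 \<le> ((1-\<kappa>^2) * t)^2" by (rule power_mono[OF ny']) simp
      show "c^2 \<le> (\<kappa>*t)^2" using cb by (metis abs_ge_zero power2_abs power_mono)
    qed
    also have "\<dots> = t^2 - (\<kappa>^2 - (\<kappa>^2)^2) * t^2" by (simp add: power2_eq_square algebra_simps)
    also have "\<dots> \<le> t^2"
    proof -
      have "(\<kappa>^2)^2 \<le> \<kappa>^2" using k1 by (simp add: power2_eq_square mult_left_le)
      then have "0 \<le> (\<kappa>^2 - (\<kappa>^2)^2) * t^2" by simp
      then show ?thesis by simp
    qed
    finally have "norm (f w - p) \<le> t" by (rule dist_le_from_sq) (use t0 in simp)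
    then have dfw: "dist p (f w) \<le> t" by (simp add: dist_norm norm_minus_commute)
    have fwA: "f w \<in> A" using w dfw by (auto simp: A_def)
    have "infdist y A \<le> dist y (f w)" by (rule infdist_le[OF fwA])
    also have "\<dots> \<le> dist y y' + dist y' (f w)" by (rule dist_triangle)
    also have "dist y y' = \<kappa>^2 * norm (y - p)"
    proof -
      have "y - y' = \<kappa>^2 *\<^sub>R (y - p)" by (simp add: y'_def algebra_simps)
      then show ?thesis using k0 by (simp add: dist_norm)
    qed
    also have "dist y' (f w) = \<bar>c\<bar>"
    proof -
      have "f w - y' = c *\<^sub>R N" using fw by (simp add: algebra_simps)
      then have "norm (f w - y') = \<bar>c\<bar>" using nN by simp
      then show ?thesis by (simp add: dist_norm norm_minus_commute)
    qed
    also have "\<kappa>^2 * norm (y - p) + \<bar>c\<bar> \<le> 441/40 * \<epsilon> * t + 21 * \<epsilon> * t"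
    proof (rule add_mono)
      have "\<kappa>^2 * norm (y - p) \<le> \<kappa>^2 * t" by (rule mult_left_mono[OF dy]) simp
      also have "\<dots> \<le> (441/40 * \<epsilon>) * t" by (rule mult_right_mono[OF k2]) (use t0 in simp)
      finally show "\<kappa>^2 * norm (y - p) \<le> 441/40 * \<epsilon> * t" .
      show "\<bar>c\<bar> \<le> 21 * \<epsilon> * t" using cb by (simp add: \<kappa>_def)
    qed
    also have "\<dots> \<le> 40*\<epsilon>*t" using et by simp
    finally show ?thesis .
  qed
  have s1: "(SUP x\<in>A. infdist x Pl) \<le> 40*\<epsilon>*t"
    by (rule cSUP_least) (use pA D1 in blast)+
  have s2: "(SUP y\<in>Pl. infdist y A) \<le> 40*\<epsilon>*t"
    by (rule cSUP_least) (use pPl D2 in blast)+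
  have "hausdorff_dist A Pl \<le> 40*\<epsilon>*t" unfolding hausdorff_dist_def using s1 s2 by simp
  then have "norm N = 1 \<and> hausdorff_dist (f ` sphere 0 1 \<inter> cball (f x0) t)
            ({q. N \<bullet> (q - f x0) = 0} \<inter> cball (f x0) t) \<le> 40 * \<epsilon> * t"
    using nN unfolding A_def Pl_def p_def by blast
  then show ?thesis by blast
qed


lemma hd_nonneg:
  fixes A B :: "'a::metric_space set"
  assumes "c \<in> A" "c \<in> B" "A \<subseteq> cball c t"
  shows "0 \<le> hausdorff_dist A B"
proof -
  have "bdd_above ((\<lambda>a. infdist a B) ` A)"
  proof (rule bdd_aboveI2)
    fix a assume "a \<in> A"
    then have "infdist a B \<le> dist a c" using infdist_le[OF assms(2)] by blast
    also have "\<dots> \<le> t" using \<open>a \<in> A\<close> assms(3) by (auto simp: dist_commute)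
    finally show "infdist a B \<le> t" .
  qed
  then have "infdist c B \<le> (SUP a\<in>A. infdist a B)" by (rule cSUP_upper[OF assms(1)])
  then have "0 \<le> (SUP a\<in>A. infdist a B)" using infdist_nonneg[of c B] by linarith
  then show ?thesis unfolding hausdorff_dist_def by simp
qed

lemma QS_from_hyp:
  fixes f :: "real ^ 'n \<Rightarrow> real ^ 'n"
  assumes hom: "homeomorphism UNIV UNIV f g"
    and hyp: "(SUP z \<in> sphere 0 1. H_tilde f (ball z r)) \<le> ereal c"
    and x0: "x0 \<in> sphere 0 1"
  shows "QS f (ball x0 r) (1 + c)"
  unfolding QS_def
proof (intro ballI impI)
  fix x y z assume xB: "x \<in> ball x0 r" and yB: "y \<in> ball x0 r" and zB: "z \<in> ball x0 r"
    and xyz: "dist x y \<le> dist x z"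
  have gf: "\<And>x. g (f x) = x" using hom by (auto simp: homeomorphism_def)
  show "dist (f x) (f y) \<le> (1 + c) * dist (f x) (f z)"
  proof (cases "x = z")
    case True
    then have "y = x" using xyz by simp
    then show ?thesis using True by simp
  next
    case False
    have le1: "H_tilde f (ball x0 r) \<le> ereal c"
      using SUP_upper[OF x0, of "\<lambda>z. H_tilde f (ball z r)"] hyp by (rule order_trans)
    have mem: "(x, y, z) \<in> {(x, y, z). x \<in> ball x0 r \<and> y \<in> ball x0 r \<and> z \<in> ball x0 r \<and> x \<noteq> z \<and> dist x y \<le> dist x z}"
      using xB yB zB False xyz by simp
    have le2: "ereal (dist (f x) (f y) / dist (f x) (f z)) \<le> H_const f (ball x0 r)"
      unfolding H_const_def using SUP_upper[OF mem, of "\<lambda>p. case p of (x, y, z) \<Rightarrow> ereal (dist (f x) (f y) / dist (f x) (f z))"]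
      by simp
    have "ereal (dist (f x) (f y) / dist (f x) (f z)) - 1 \<le> H_const f (ball x0 r) - 1"
      by (rule ereal_minus_mono[OF le2]) simp
    also have "\<dots> \<le> ereal c" using le1 by (simp add: H_tilde_def)
    finally have "ereal (dist (f x) (f y) / dist (f x) (f z)) - ereal 1 \<le> ereal c" by (simp add: one_ereal_def)
    then have "dist (f x) (f y) / dist (f x) (f z) \<le> 1 + c" by simp
    moreover have "0 < dist (f x) (f z)" using False gf by (metis zero_less_dist_iff)
    ultimately show ?thesis by (simp add: divide_le_eq)
  qed
qed

theorem corollary2p6:
  fixes f :: "real ^ 'n \<Rightarrow> real ^ 'n" and \<delta> r :: real
  assumes "CARD('n) \<ge> 2"
    and "0 < \<delta>" and "\<delta> < 1"
    and "quasiconformal f"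
    and "0 < r"
    and "(SUP z \<in> sphere 0 1. H_tilde f (ball z r)) \<le> ereal (\<delta> / 40)"
  shows "\<exists>R > 0. reifenberg_flat \<delta> R (f ` sphere 0 1)"
proof -
  obtain g where hom: "homeomorphism UNIV UNIV f g" using assms(4) by (auto simp: quasiconformal_def)
  have gf: "\<And>x. g (f x) = x" and cf: "continuous_on UNIV f" using hom by (auto simp: homeomorphism_def)
  define \<epsilon> where "\<epsilon> = \<delta> / 40"
  have eps: "0 < \<epsilon>" "\<epsilon> \<le> 1/40" using assms(2,3) by (auto simp: \<epsilon>_def)
  have QS: "QS f (ball x0 r) (1 + \<epsilon>)" if "x0 \<in> sphere 0 1" for x0
    using QS_from_hyp[OF hom _ that] assms(6) by (simp add: \<epsilon>_def)
  define \<gamma> where "\<gamma> = 1/(1+\<epsilon>) + 1/(1+\<epsilon>)^2"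
  have \<gamma>: "1.92 \<le> \<gamma>" using gamma_bound[OF eps] by (simp add: \<gamma>_def)
  then have "1 < \<gamma>" by simp
  then obtain k where k: "8 * (1+\<epsilon>)^2 / \<epsilon> < \<gamma>^k" using real_arch_pow by blast
  have gk: "(1+\<epsilon>)^2 \<le> (\<epsilon>/8) * \<gamma>^k"
  proof -
    have "8 * (1+\<epsilon>)^2 < \<epsilon> * \<gamma>^k" using k eps by (simp add: divide_less_eq mult.commute)
    then show ?thesis by simp
  qed
  define s0 where "s0 = min (r/16) (1/(2^k*32))"
  have s0: "0 < s0" "16 * s0 \<le> r" "2^k * 32 * s0 \<le> 1"
  proof -
    show "0 < s0" using assms(5) by (simp add: s0_def)
    show "16 * s0 \<le> r" unfolding s0_def by linarith
    have "s0 \<le> 1/(2^k*32)" unfolding s0_def by linarith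
    then have "2^k * 32 * s0 \<le> 2^k * 32 * (1/(2^k*32))" by (rule mult_left_mono) simp
    then show "2^k * 32 * s0 \<le> 1" by simp
  qed
  define \<phi> where "\<phi> x0 = dist (f ((1+s0) *\<^sub>R x0)) (f ((1-s0) *\<^sub>R x0))" for x0 :: "real^'n"
  have cont_lin: "continuous_on S (\<lambda>x. f (c *\<^sub>R x))" for S c
    by (rule continuous_on_compose2[OF cf]) (auto intro: continuous_intros)
  have c\<phi>: "continuous_on (sphere 0 1) \<phi>" unfolding \<phi>_def
    by (intro continuous_on_dist cont_lin)
  have ne: "sphere (0::real^'n) 1 \<noteq> {}" by simp
  obtain xm where xm: "xm \<in> sphere 0 1" "\<And>y. y \<in> sphere 0 1 \<Longrightarrow> \<phi> xm \<le> \<phi> y"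
    using continuous_attains_inf[OF compact_sphere ne c\<phi>] by blast
  define R where "R = \<phi> xm"
  have R0: "0 < R"
  proof -
    have "(1+s0) *\<^sub>R xm \<noteq> (1-s0) *\<^sub>R xm"
    proof
      assume "(1+s0) *\<^sub>R xm = (1-s0) *\<^sub>R xm"
      then have "((1+s0) - (1-s0)) *\<^sub>R xm = 0" by (metis scaleR_diff_left diff_self)
      then show False using xm(1) s0(1) by simp
    qed
    then have "f ((1+s0) *\<^sub>R xm) \<noteq> f ((1-s0) *\<^sub>R xm)" using gf by metis
    then show ?thesis by (simp add: R_def \<phi>_def)
  qed
  have "reifenberg_flat \<delta> R (f ` sphere 0 1)"
    unfolding reifenberg_flat_def
  proof (intro conjI ballI allI impI)
    show "closed (f ` sphere 0 1)"
      by (rule compact_imp_closed, rule compact_continuous_image[OF continuous_on_subset[OF cf] compact_sphere]) simp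
  next
    fix x t assume xS: "x \<in> f ` sphere 0 1" and tt: "0 < t \<and> t \<le> R"
    then obtain x0 where x0: "x0 \<in> sphere 0 1" "x = f x0" by blast
    define \<psi> where "\<psi> s = dist (f ((1+s) *\<^sub>R x0)) (f ((1-s) *\<^sub>R x0))" for s
    have c\<psi>: "continuous_on {0..s0} \<psi>" unfolding \<psi>_def
      by (intro continuous_on_dist continuous_on_compose2[OF cf]) (auto intro!: continuous_intros)
    have "\<psi> 0 \<le> t" using tt by (simp add: \<psi>_def)
    moreover have "t \<le> \<psi> s0" using tt xm(2)[OF x0(1)] by (simp add: R_def \<psi>_def \<phi>_def)
    ultimately obtain s where s: "0 \<le> s" "s \<le> s0" "\<psi> s = t"
      using IVT'[of \<psi> 0 t s0] c\<psi> s0(1) by auto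
    have sp: "0 < s" using s tt by (cases "s = 0") (auto simp: \<psi>_def)
    have s16: "16 * s \<le> r" using s s0 by simp
    have sk: "2^k * 32 * s \<le> 1"
    proof -
      have "2^k * 32 * s \<le> 2^k * 32 * s0" using s(2) by simp
      then show ?thesis using s0(3) by linarith
    qed
    have nx0: "norm x0 = 1" using x0(1) by simp
    obtain N where N: "norm N = 1" and hd: "hausdorff_dist (f ` sphere 0 1 \<inter> cball (f x0) t)
            ({q. N \<bullet> (q - f x0) = 0} \<inter> cball (f x0) t) \<le> 40 * \<epsilon> * t"
      using local_flat[OF hom nx0 QS[OF x0(1)] eps sp s16 sk gk[unfolded \<gamma>_def] _ ] s(3) tt
      by (auto simp: \<psi>_def)
    define L where "L = {v. N \<bullet> v = 0}"
    have LF: "L \<in> {L. subspace L \<and> dim L = CARD('n) - 1}"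
    proof -
      have "N \<noteq> 0" using N by auto
      then show ?thesis using dim_hyperplane[of N] by (simp add: L_def subspace_hyperplane)
    qed
    have imL: "(\<lambda>v. x + v) ` L = {q. N \<bullet> (q - x) = 0}"
    proof (rule set_eqI)
      fix q show "q \<in> (\<lambda>v. x + v) ` L \<longleftrightarrow> q \<in> {q. N \<bullet> (q - x) = 0}"
        by (auto simp: L_def image_iff intro!: exI[of _ "q - x"])
    qed
    define F where "F L' = hausdorff_dist (f ` sphere 0 1 \<inter> cball x t) ((\<lambda>v. x + v) ` L' \<inter> cball x t)" for L'
    have bb: "bdd_below (F ` {L. subspace L \<and> dim L = CARD('n) - 1})"
    proof (rule bdd_belowI2)
      fix L' :: "(real^'n) set" assume "L' \<in> {L. subspace L \<and> dim L = CARD('n) - 1}"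
      then have "0 \<in> L'" by (auto simp: subspace_0)
      then have "x + 0 \<in> (\<lambda>v. x + v) ` L'" by (rule imageI)
      then have b1: "x \<in> (\<lambda>v. x + v) ` L' \<inter> cball x t" using tt by simp
      have a1: "x \<in> f ` sphere 0 1 \<inter> cball x t" using xS tt by simp
      show "0 \<le> F L'" unfolding F_def by (rule hd_nonneg[OF a1 b1]) auto
    qed
    have "(INF L\<in>{L. subspace L \<and> dim L = CARD('n) - 1}. F L) \<le> F L"
      by (rule cINF_lower[OF bb LF])
    also have "F L \<le> 40 * \<epsilon> * t" using hd by (simp add: F_def imL flip: x0(2))
    finally have "(INF L\<in>{L. subspace L \<and> dim L = CARD('n) - 1}. F L) \<le> 40 * \<epsilon> * t" .
    then have "(1/t) * (INF L\<in>{L. subspace L \<and> dim L = CARD('n) - 1}. F L) \<le> (1/t) * (40 * \<epsilon> * t)"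
      by (rule mult_left_mono) (use tt in simp)
    also have "\<dots> = \<delta>" using tt by (simp add: \<epsilon>_def)
    finally show "theta (f ` sphere 0 1) x t \<le> \<delta>" unfolding theta_def F_def .
  qed
  then show ?thesis using R0 by blast
qed

end
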